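(* Let $n\ge1$, $k>0$ and $P\in\mathscr P_n$. Then for all $\alpha\in\mathbb C$ with $|\alpha|\le1$, all $R>r\ge k$ and all $|z|\ge1$, $$\big|B[P\circ\sigma](z)-\alpha B[P\circ\rho](z)\big|\le\frac{1}{k^n}|R^n-\alpha r^n|\,|B[z^n]|\,\max_{|z|=k}|P(z)|.$$ Equality holds for $P(z)=az^n$, $a\ne0$.
   Context: For an integer $n\ge1$, $\mathscr P_n$ denotes the set of complex polynomials of degree at most $n$. Fix complex numbers $\lambda_0,\lambda_1,\lambda_2$ such that all zeros of $U(z)=\lambda_0+n\lambda_1 z+\frac{n(n-1)}{2}\lambda_2 z^2$ lie in the half-plane $\{z\in\mathbb C:|z|\le|z-n/2|\}$. The operator $B$ (of the class $\mathcal B_n$) sends $P\in\mathscr P_n$ to $B[P](z)=\lambda_0P(z)+\lambda_1\frac{nz}{2}P'(z)+\lambda_2\left(\frac{nz}{2}\right)^2\frac{P''(z)}{2!}$. For a polynomial $P$ and a map $\rho$, $P\circ\rho$ denotes $z\mapsto P(\rho(z))$, and $B[P\circ\rho](z)$ is $B$ applied to the polynomial $P\circ\rho$, evaluated at $z$. $B[z^n]$ denotes $B$ applied to the monomial $z\mapsto z^n$, evaluated at the point $z$ under consideration; thus $|B[z^n]|=|z|^n\,|\lambda_0+\lambda_1 n^2/2+\lambda_2 n^3(n-1)/8|$. $\sigma(z)=Rz$, $\rho(z)=rz$. *)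

theory Defs
  imports "HOL-Analysis.Analysis" "HOL-Computational_Algebra.Polynomial"
begin

definition U_poly :: "nat \<Rightarrow> complex \<Rightarrow> complex \<Rightarrow> complex \<Rightarrow> complex poly" where
  "U_poly n l0 l1 l2 = [: l0, of_nat n * l1, of_nat (n * (n - 1)) / 2 * l2 :]"

definition B_admissible :: "nat \<Rightarrow> complex \<Rightarrow> complex \<Rightarrow> complex \<Rightarrow> bool" where
  "B_admissible n l0 l1 l2 \<longleftrightarrow>
     (\<forall>z. poly (U_poly n l0 l1 l2) z = 0 \<longrightarrow> cmod z \<le> cmod (z - of_nat n / 2))"

definition B_op :: "nat \<Rightarrow> complex \<Rightarrow> complex \<Rightarrow> complex \<Rightarrow> complex poly \<Rightarrow> complex \<Rightarrow> complex" where
  "B_op n l0 l1 l2 P z =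
     l0 * poly P z + l1 * (of_nat n * z / 2) * poly (pderiv P) z
     + l2 * (of_nat n * z / 2)^2 * poly (pderiv (pderiv P)) z / 2"

definition max_circle :: "complex poly \<Rightarrow> real \<Rightarrow> real" where
  "max_circle P k = (SUP z\<in>sphere 0 k. cmod (poly P z))"

end

theory Submission
  imports Defs "HOL-Computational_Algebra.Fundamental_Theorem_Algebra"
begin


lemma root_unity_pow_ne1:
  assumes "0 < i" "i < N"
  shows "cis (2*pi/real N) ^ i \<noteq> 1"
proof
  assume h: "cis (2*pi/real N) ^ i = 1"
  have "cis (2*pi/real N) ^ i = cis (real i * (2*pi/real N))" by (rule Complex.DeMoivre)
  with h have "cos (real i * (2*pi/real N)) = 1" by (simp add: complex_eq_iff)
  then obtain m :: int where m: "real i * (2*pi/real N) = real_of_int m * 2 * pi"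
    by (subst (asm) cos_one_2pi_int) blast
  have "real i = real_of_int m * real N" using m assms by (simp add: field_simps)
  hence "int i = m * int N" by (metis of_int_eq_iff of_int_mult of_int_of_nat_eq)
  with assms show False
  proof -
    have "m > 0" using \<open>int i = m * int N\<close> assms
    proof -
      have "0 < m * int N" using \<open>int i = m * int N\<close> assms by linarith
      thus ?thesis by (simp add: zero_less_mult_iff)
    qed
    hence "m * int N \<ge> int N" by (simp add: mult_le_cancel_right1)
    with \<open>int i = m * int N\<close> assms show False by linarith
  qed
qed

lemma sum_root_unity_pow:
  assumes "i < N"
  shows "(\<Sum>j<N. (cis (2*pi/real N) ^ i) ^ j) = (if i = 0 then of_nat N else 0)"
proof (cases "i = 0")
  case True thus ?thesis by simp
next
  case False
  let ?x = "cis (2*pi/real N) ^ i"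
  have ne: "?x \<noteq> 1" using root_unity_pow_ne1[of i N] False assms by simp
  have "?x ^ N = (cis (2*pi/real N) ^ N) ^ i"
    by (metis power_mult mult.commute)
  also have "cis (2*pi/real N) ^ N = cis (real N * (2*pi/real N))" by (rule Complex.DeMoivre)
  also have "real N * (2*pi/real N) = 2*pi" using assms by simp
  finally have xN: "?x ^ N = 1" by simp
  show ?thesis using ne xN False by (simp add: geometric_sum)
qed



lemma poly_sum_lessN:
  fixes q :: "'a::comm_semiring_1 poly"
  assumes "degree q < N"
  shows "poly q x = (\<Sum>i<N. coeff q i * x ^ i)"
proof -
  have "poly q x = (\<Sum>i\<le>degree q. coeff q i * x ^ i)" by (rule poly_altdef)
  also have "\<dots> = (\<Sum>i<N. coeff q i * x ^ i)"
    using assms by (intro sum.mono_neutral_left) (auto simp: coeff_eq_0)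
  finally show ?thesis .
qed

lemma mean_value_poly:
  fixes p :: "complex poly"
  assumes "degree p < N"
  shows "of_nat N * poly p c = (\<Sum>j<N. poly p (c + w * cis (2*pi/real N)^j))"
proof -
  define q where "q = p \<circ>\<^sub>p [:c,1:]"
  define \<omega> where "\<omega> = cis (2*pi/real N)"
  have pq: "poly p (c + x) = poly q x" for x by (simp add: q_def poly_pcompose)
  have dq: "degree q < N" using assms by (simp add: q_def degree_pcompose)
  have "(\<Sum>j<N. poly p (c + w * \<omega>^j)) = (\<Sum>j<N. \<Sum>i<N. coeff q i * (w * \<omega>^j) ^ i)"
    by (simp add: pq poly_sum_lessN[OF dq])
  also have "\<dots> = (\<Sum>i<N. \<Sum>j<N. coeff q i * w ^ i * (\<omega> ^ i) ^ j)"
    by (subst sum.swap) (simp add: power_mult_distrib mult.assoc flip: power_mult, simp add: mult.commute)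
  also have "\<dots> = (\<Sum>i<N. coeff q i * w ^ i * (\<Sum>j<N. (\<omega> ^ i) ^ j))"
    by (simp add: sum_distrib_left)
  also have "\<dots> = (\<Sum>i<N. coeff q i * w ^ i * (if i = 0 then of_nat N else 0))"
    by (intro sum.cong refl) (simp add: \<omega>_def sum_root_unity_pow)
  also have "\<dots> = coeff q 0 * of_nat N"
    using assms by (simp add: sum.delta' if_distrib cong: if_cong)
  also have "coeff q 0 = poly p c" using pq[of 0] by (simp add: poly_0_coeff_0)
  finally show ?thesis by (simp add: \<omega>_def mult.commute)
qed

lemma maxmod_poly:
  fixes p :: "complex poly" and \<rho> K :: real
  assumes rho: "\<rho> > 0" and bnd: "\<And>v. cmod v = \<rho> \<Longrightarrow> cmod (poly p v) \<le> K"
    and v: "cmod v \<le> \<rho>"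
  shows "cmod (poly p v) \<le> K"
proof -
  define f where "f = (\<lambda>v. cmod (poly p v))"
  have contf: "continuous_on UNIV f" unfolding f_def by (intro continuous_intros)
  have cb: "compact (cball (0::complex) \<rho>)" by simp
  obtain v0 where v0: "v0 \<in> cball 0 \<rho>" and v0max: "\<And>y. y \<in> cball 0 \<rho> \<Longrightarrow> f y \<le> f v0"
    using continuous_attains_sup[OF cb _ continuous_on_subset[OF contf]] rho
    by (metis centre_in_cball empty_iff less_imp_le subset_UNIV)
  define m where "m = f v0"
  define S where "S = {y \<in> cball 0 \<rho>. f y = m}"
  have "closed S" unfolding S_def
    by (rule continuous_closed_preimage_constant) (auto intro: continuous_on_subset[OF contf])
  moreover have "bounded S" unfolding S_def by (rule bounded_subset[OF bounded_cball[of 0 \<rho>]]) auto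
  ultimately have cS: "compact S" by (simp add: compact_eq_bounded_closed)
  have "v0 \<in> S" using v0 by (simp add: S_def m_def)
  then obtain v1 where v1S: "v1 \<in> S" and v1max: "\<And>y. y \<in> S \<Longrightarrow> norm y \<le> norm v1"
    using continuous_attains_sup[OF cS _ continuous_on_norm_id] by blast
  have v1c: "norm v1 \<le> \<rho>" and fv1: "f v1 = m" using v1S by (auto simp: S_def)
  have "norm v1 = \<rho>"
  proof (rule ccontr)
    assume "norm v1 \<noteq> \<rho>"
    hence lt: "norm v1 < \<rho>" using v1c by simp
    define \<delta> where "\<delta> = \<rho> - norm v1"
    define e :: complex where "e = (if v1 = 0 then 1 else sgn v1)"
    define N where "N = Suc (degree p)"
    define \<omega> where "\<omega> = cis (2*pi/real N)"
    have Npos: "N > 0" by (simp add: N_def)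
    have ne: "norm e = 1" by (simp add: e_def norm_sgn)
    have nw: "norm (\<omega> ^ j) = 1" for j by (simp add: \<omega>_def norm_power)
    define z where "z = (\<lambda>j. v1 + of_real \<delta> * e * \<omega> ^ j)"
    have zin: "z j \<in> cball 0 \<rho>" for j
    proof -
      have "norm (z j) \<le> norm v1 + norm (of_real \<delta> * e * \<omega> ^ j)"
        unfolding z_def by (rule norm_triangle_ineq)
      also have "norm (of_real \<delta> * e * \<omega> ^ j) = \<delta>"
        using lt by (simp add: norm_mult ne nw \<delta>_def flip: of_real_diff)
      finally show ?thesis by (simp add: \<delta>_def)
    qed
    have fz: "f (z j) \<le> m" for j using v0max[OF zin] by (simp add: m_def)
    have mv: "of_nat N * poly p v1 = (\<Sum>j<N. poly p (z j))"
      unfolding z_def \<omega>_def by (rule mean_value_poly) (simp add: N_def)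
    have "real N * m = norm (of_nat N * poly p v1)"
      using fv1 by (simp add: f_def norm_mult)
    also have "\<dots> \<le> (\<Sum>j<N. f (z j))" unfolding mv f_def by (rule norm_sum)
    finally have ge: "real N * m \<le> (\<Sum>j<N. f (z j))" .
    have "(\<Sum>j<N. m - f (z j)) = real N * m - (\<Sum>j<N. f (z j))"
      by (simp add: sum_subtractf)
    also have "\<dots> \<le> 0" using ge by simp
    moreover have "(\<Sum>j<N. m - f (z j)) \<ge> 0" using fz by (intro sum_nonneg) auto
    ultimately have "(\<Sum>j<N. m - f (z j)) = 0" by linarith
    hence "\<forall>j\<in>{..<N}. m - f (z j) = 0"
      using fz by (subst (asm) sum_nonneg_eq_0_iff) auto
    hence "f (z 0) = m" using Npos by auto
    hence "z 0 \<in> S" using zin[of 0] by (simp add: S_def)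
    hence "norm (z 0) \<le> norm v1" by (rule v1max)
    moreover have "norm (z 0) = \<rho>"
    proof (cases "v1 = 0")
      case True thus ?thesis using rho by (simp add: z_def e_def \<delta>_def)
    next
      case False
      have "z 0 = of_real (norm v1 + \<delta>) * sgn v1"
      proof -
        have v1eq: "v1 = of_real (norm v1) * sgn v1" using False by (simp add: Complex.sgn_eq)
        have "z 0 = v1 + of_real \<delta> * sgn v1" using False by (simp add: z_def e_def)
        also have "\<dots> = of_real (norm v1) * sgn v1 + of_real \<delta> * sgn v1" using v1eq by simp
        finally show ?thesis by (simp add: distrib_right)
      qed
      thus ?thesis using False lt rho by (simp add: norm_mult norm_sgn \<delta>_def)
    qed
    ultimately show False using lt by simp
  qed
  hence "m \<le> K" using bnd[of v1] fv1 by (simp add: f_def)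
  moreover have "f v \<le> m" using v0max v by (simp add: m_def)
  ultimately show ?thesis by (simp add: f_def)
qed



lemma max_circle_bound:
  assumes "k > 0" "cmod x = k"
  shows "cmod (poly P x) \<le> max_circle P k"
proof -
  have "compact ((\<lambda>z. cmod (poly P z)) ` sphere 0 k)"
    by (intro compact_continuous_image continuous_intros) auto
  hence "bdd_above ((\<lambda>z. cmod (poly P z)) ` sphere 0 k)"
    by (intro bounded_imp_bdd_above compact_imp_bounded)
  thus ?thesis unfolding max_circle_def using assms by (intro cSUP_upper) auto
qed

definition revp :: "nat \<Rightarrow> complex poly \<Rightarrow> complex poly" where
  "revp n P = (\<Sum>j\<le>n. monom (coeff P (n - j)) j)"

lemma poly_revp: "poly (revp n P) v = (\<Sum>j\<le>n. coeff P (n - j) * v ^ j)"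
  by (simp add: revp_def poly_sum poly_monom)

lemma poly_via_revp:
  assumes "degree P \<le> n" "x \<noteq> 0"
  shows "poly P x = x ^ n * poly (revp n P) (1 / x)"
proof -
  have "poly P x = (\<Sum>i<Suc n. coeff P i * x ^ i)"
    using assms by (intro poly_sum_lessN) simp
  also have "\<dots> = (\<Sum>i\<le>n. coeff P i * x ^ i)" by (simp add: lessThan_Suc_atMost)
  also have "\<dots> = (\<Sum>j\<le>n. coeff P (n - j) * x ^ (n - j))"
    by (rule sum.reindex_bij_witness[where i="\<lambda>i. n - i" and j="\<lambda>i. n - i"]) auto
  also have "\<dots> = (\<Sum>j\<le>n. x ^ n * (coeff P (n - j) * (1 / x) ^ j))"
  proof (intro sum.cong refl)
    fix j assume "j \<in> {..n}"
    hence "x ^ n = x ^ (n - j) * x ^ j" by (simp add: power_add[symmetric])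
    thus "coeff P (n - j) * x ^ (n - j) = x ^ n * (coeff P (n - j) * (1 / x) ^ j)"
      using assms by (simp add: power_one_over field_simps)
  qed
  also have "\<dots> = x ^ n * poly (revp n P) (1 / x)"
    by (simp add: poly_revp sum_distrib_left)
  finally show ?thesis .
qed

lemma revp_bound:
  assumes "degree P \<le> n" "k > 0" "cmod v \<le> 1 / k"
  shows "cmod (poly (revp n P) v) \<le> max_circle P k / k ^ n"
proof (rule maxmod_poly[where \<rho>="1/k"])
  show "1 / k > 0" using assms by simp
  show "cmod v \<le> 1 / k" by fact
  fix w assume w: "cmod w = 1 / k"
  hence w0: "w \<noteq> 0" using assms by auto
  have "poly P (1 / w) = (1 / w) ^ n * poly (revp n P) w"
    using poly_via_revp[OF assms(1), of "1 / w"] w0 by simp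
  hence "poly (revp n P) w = w ^ n * poly P (1 / w)" using w0
    by (simp add: power_one_over field_simps)
  hence "cmod (poly (revp n P) w) = (1 / k) ^ n * cmod (poly P (1 / w))"
    by (simp add: norm_mult norm_power w)
  also have "cmod (poly P (1 / w)) \<le> max_circle P k"
    using assms w by (intro max_circle_bound) (simp_all add: norm_divide)
  finally show "cmod (poly (revp n P) w) \<le> max_circle P k / k ^ n"
    using assms by (simp add: power_one_over divide_right_mono mult_left_mono field_simps)
qed

lemma lead_bound:
  assumes "degree P \<le> n" "k > 0"
  shows "cmod (coeff P n) \<le> max_circle P k / k ^ n"
proof -
  have "poly (revp n P) 0 = coeff P n" by (simp add: poly_revp zero_power)
  thus ?thesis using revp_bound[OF assms, of 0] assms by simp
qed

lemma outer_bound: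
  assumes "degree P \<le> n" "k > 0" "cmod x \<ge> k"
  shows "cmod (poly P x) \<le> max_circle P k * cmod x ^ n / k ^ n"
proof -
  have x0: "x \<noteq> 0" using assms by auto
  have "cmod (poly P x) = cmod x ^ n * cmod (poly (revp n P) (1 / x))"
    using poly_via_revp[OF assms(1) x0] by (simp add: norm_mult norm_power)
  also have "\<dots> \<le> cmod x ^ n * (max_circle P k / k ^ n)"
    using assms x0 by (intro mult_left_mono revp_bound) (simp_all add: norm_divide field_simps)
  finally show ?thesis by (simp add: mult.commute)
qed



lemma key_ineq:
  fixes a b d :: complex and A m :: real
  assumes "Re a \<ge> A" "Re b \<ge> A" "A > 0" "m \<ge> 2" "of_real m * a * b = d * (a + b)"
  shows "Re d \<ge> A"
proof -
  have "of_real m * a * b * cnj (a + b) = d * ((a + b) * cnj (a + b))"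
    using assms(5) by simp
  hence "Re (of_real m * a * b * cnj (a + b)) = Re (d * ((a + b) * cnj (a + b)))" by (rule arg_cong[where f=Re])
  moreover have "Re (of_real m * a * b * cnj (a + b)) = m * ((cmod a)^2 * Re b + (cmod b)^2 * Re a)"
    unfolding cmod_power2 by (simp add: algebra_simps power2_eq_square)
  moreover have "Re (d * ((a + b) * cnj (a + b))) = Re d * (cmod (a + b))^2"
    unfolding cmod_power2 by (simp add: algebra_simps power2_eq_square)
  ultimately have eq: "m * ((cmod a)^2 * Re b + (cmod b)^2 * Re a) = Re d * (cmod (a + b))^2"
    by simp
  have "(cmod (a + b))^2 \<le> 2 * ((cmod a)^2 + (cmod b)^2)"
  proof -
    have "cmod (a + b) \<le> cmod a + cmod b" by (rule norm_triangle_ineq)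
    hence "(cmod (a + b))^2 \<le> (cmod a + cmod b)^2" by (simp add: power_mono)
    also have "\<dots> \<le> 2 * ((cmod a)^2 + (cmod b)^2)"
      using sum_squares_ge_zero[of "cmod a - cmod b" 0] by (simp add: power2_eq_square algebra_simps)
    finally show ?thesis .
  qed
  have "(cmod a)^2 * Re b + (cmod b)^2 * Re a \<ge> (cmod a)^2 * A + (cmod b)^2 * A"
    using assms by (intro add_mono mult_left_mono) auto
  hence "m * ((cmod a)^2 * Re b + (cmod b)^2 * Re a) \<ge> 2 * ((cmod a)^2 + (cmod b)^2) * A"
    using assms(4) assms(3)
  proof -
    have "m * ((cmod a)^2 * Re b + (cmod b)^2 * Re a) \<ge> m * ((cmod a)^2 * A + (cmod b)^2 * A)"
      using \<open>(cmod a)^2 * Re b + (cmod b)^2 * Re a \<ge> _\<close> assms(4) by (intro mult_left_mono) auto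
    moreover have "m * ((cmod a)^2 * A + (cmod b)^2 * A) \<ge> 2 * ((cmod a)^2 * A + (cmod b)^2 * A)"
      using assms(3,4) by (intro mult_right_mono) auto
    ultimately show ?thesis by (simp add: algebra_simps)
  qed
  moreover have "2 * ((cmod a)^2 + (cmod b)^2) * A \<ge> (cmod (a + b))^2 * A"
    using \<open>(cmod (a + b))^2 \<le> 2 * ((cmod a)^2 + (cmod b)^2)\<close> assms(3) by (simp add: mult_right_mono)
  ultimately have ge: "Re d * (cmod (a + b))^2 \<ge> A * (cmod (a + b))^2" using eq by (simp add: mult.commute)
  have "a + b \<noteq> 0"
  proof
    assume "a + b = 0" hence "Re a + Re b = 0" by (metis plus_complex.sel(1) zero_complex.sel(1))
    thus False using assms by linarith
  qed
  hence "(cmod (a + b))^2 > 0" by simp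
  with ge show ?thesis by (simp add: mult_le_cancel_right)
qed

lemma quad_factor:
  fixes al B G :: complex
  assumes "G \<noteq> 0"
  obtains r1 r2 where "\<And>x. al + B * x + G * x^2 = G * (x - r1) * (x - r2)"
proof -
  define s where "s = csqrt (B^2 - 4 * G * al)"
  have s2: "s^2 = B^2 - 4 * G * al" by (simp add: s_def)
  define r1 where "r1 = (- B + s) / (2 * G)"
  define r2 where "r2 = (- B - s) / (2 * G)"
  have "al + B * x + G * x^2 = G * (x - r1) * (x - r2)" for x
  proof -
    have "G * (x - r1) * (x - r2) = G * x^2 + B * x + (B^2 - s^2) / (4 * G)"
      using assms by (simp add: r1_def r2_def field_simps power2_eq_square)
    also have "(B^2 - s^2) / (4 * G) = al" using assms by (simp add: s2)
    finally show ?thesis by simp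
  qed
  thus ?thesis by (rule that)
qed

lemma laguerre_step:
  fixes al be ga u :: complex and m :: nat
  defines "mm \<equiv> (of_nat m :: complex)"
  assumes m1: "m \<ge> 1" and u: "Re u > 1/2"
    and q: "\<And>x. Re x > 1/2 \<Longrightarrow> al + be * mm * x + ga * (mm * (mm - 1) / 2) * x^2 \<noteq> 0"
    and x0: "Re x0 > 1/2"
  shows "(al + be * u) + (be + ga * u) * (mm - 1) * x0 + ga * ((mm - 1) * (mm - 2) / 2) * x0^2 \<noteq> 0"
proof (cases "m = 1")
  case True
  thus ?thesis using q[OF u] by (simp add: mm_def)
next
  case False
  hence m2: "m \<ge> 2" using m1 by simp
  hence mm2: "Re mm \<ge> 2" "Im mm = 0" by (simp_all add: mm_def)
  have mm0: "mm \<noteq> 0" using m2 by (simp add: mm_def)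
  show ?thesis
  proof (cases "ga = 0")
    case True
    show ?thesis
    proof (cases "be = 0")
      case True
      thus ?thesis using q[OF x0] \<open>ga = 0\<close> by simp
    next
      case False
      define r where "r = - al / (be * mm)"
      have "al + be * mm * r = 0" using False mm0 by (simp add: r_def field_simps)
      hence "Re r \<le> 1/2" using q[of r] \<open>ga = 0\<close> by force
      have al: "al = - be * mm * r" using False mm0 by (simp add: r_def field_simps)
      show ?thesis
      proof
        assume "(al + be * u) + (be + ga * u) * (mm - 1) * x0 + ga * ((mm - 1) * (mm - 2) / 2) * x0^2 = 0"
        hence "be * (u + (mm - 1) * x0 - mm * r) = 0" using \<open>ga = 0\<close> by (simp add: al algebra_simps)
        hence "u + (mm - 1) * x0 = mm * r" using False by simp
        hence "Re (u + (mm - 1) * x0) = Re (mm * r)" by (rule arg_cong[where f=Re])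
        hence "Re u + (Re mm - 1) * Re x0 = Re mm * Re r" using mm2 by simp
        moreover have "(Re mm - 1) * Re x0 \<ge> (Re mm - 1) * (1/2)" using mm2 x0 by (intro mult_left_mono) auto
        hence "(Re mm - 1) * Re x0 \<ge> Re mm / 2 - 1/2" by (simp add: field_simps)
        moreover have "Re mm * Re r \<le> Re mm * (1/2)" using mm2 \<open>Re r \<le> 1/2\<close> by (intro mult_left_mono) auto
        hence "Re mm * Re r \<le> Re mm / 2" by simp
        ultimately show False using u by linarith
      qed
    qed
  next
    case False
    define G where "G = ga * (mm * (mm - 1) / 2)"
    have G0: "G \<noteq> 0" using False m2 by (simp add: G_def mm_def)
    obtain r1 r2 where fac: "\<And>x. al + (be * mm) * x + G * x^2 = G * (x - r1) * (x - r2)"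
      using quad_factor[OF G0] by blast
    have qf: "al + be * mm * x + ga * (mm * (mm - 1) / 2) * x^2 = G * (x - r1) * (x - r2)" for x
      using fac[of x] by (simp add: G_def)
    have r1: "Re r1 \<le> 1/2" using q[of r1] qf[of r1] by force
    have r2: "Re r2 \<le> 1/2" using q[of r2] qf[of r2] by force
    have c0: "al = G * r1 * r2" using fac[of 0] by simp
    have "al + be * mm + G = G * (1 - r1) * (1 - r2)" using fac[of 1] by simp
    hence c1: "be * mm = - G * (r1 + r2)" using c0 by (simp add: algebra_simps eq_neg_iff_add_eq_0)
    have c2: "ga * (mm - 1) = 2 * G / mm" using mm0 by (simp add: G_def field_simps)
    define A where "A = Re x0 - 1/2"
    have Apos: "A > 0" using x0 by (simp add: A_def)
    show ?thesis
    proof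
      assume g0: "(al + be * u) + (be + ga * u) * (mm - 1) * x0 + ga * ((mm - 1) * (mm - 2) / 2) * x0^2 = 0"
      have "mm * ((al + be * u) + (be + ga * u) * (mm - 1) * x0 + ga * ((mm - 1) * (mm - 2) / 2) * x0^2)
            = mm * (al + be * mm * x0 + G * x0^2) + (u - x0) * (be * mm + 2 * G * x0)"
        using mm0 by (simp add: G_def field_simps power2_eq_square)
      also have "\<dots> = mm * (G * (x0 - r1) * (x0 - r2)) + (u - x0) * (- G * (r1 + r2) + 2 * G * x0)"
        by (subst fac[of x0]) (simp only: c1)
      also have "\<dots> = G * (mm * (x0 - r1) * (x0 - r2) - (x0 - u) * ((x0 - r1) + (x0 - r2)))"
        by (simp add: algebra_simps)
      finally have "mm * (x0 - r1) * (x0 - r2) = (x0 - u) * ((x0 - r1) + (x0 - r2))"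
        using g0 G0 by simp
      hence "of_real (real m) * (x0 - r1) * (x0 - r2) = (x0 - u) * ((x0 - r1) + (x0 - r2))"
        by (simp add: mm_def)
      hence "Re (x0 - u) \<ge> A"
        by (rule key_ineq[rotated 4]) (use r1 r2 Apos m2 in \<open>auto simp: A_def\<close>)
      thus False using u by (simp add: A_def)
    qed
  qed
qed



fun e2 :: "(nat \<Rightarrow> complex) \<Rightarrow> nat \<Rightarrow> complex" where
  "e2 u 0 = 0"
| "e2 u (Suc k) = e2 u k + u k * (\<Sum>i<k. u i)"

definition Fk :: "nat \<Rightarrow> complex \<Rightarrow> complex \<Rightarrow> complex \<Rightarrow> (nat \<Rightarrow> complex) \<Rightarrow> nat \<Rightarrow> complex \<Rightarrow> complex" where
  "Fk n l0 l1 l2 u k x =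
     (let s1 = (\<Sum>i<k. u i); mm = (of_nat (n - k) :: complex) in
       (l0 + l1 * (of_nat n / 2) * s1 + l2 * (of_nat n ^ 2 / 4) * e2 u k)
       + (l1 * (of_nat n / 2) + l2 * (of_nat n ^ 2 / 4) * s1) * mm * x
       + (l2 * (of_nat n ^ 2 / 4)) * (mm * (mm - 1) / 2) * x^2)"

lemma alg_U: "l0 + (n * x / 2) * (n * l1 + (n * x / 2) * ((n * (n - 1)) / 2 * l2)) =
      l0 + l1 * (n / 2) * n * x + l2 * (n ^ 2 / 4) * (n * (n - 1) / 2) * (x::complex)^2"
  by (simp add: field_simps power2_eq_square)

lemma admissible_half:
  assumes adm: "B_admissible n l0 l1 l2" and n: "n \<ge> 1" and x: "Re x > 1/2"
  shows "Fk n l0 l1 l2 u 0 x \<noteq> 0"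
proof
  assume h: "Fk n l0 l1 l2 u 0 x = 0"
  define y where "y = of_nat n * x / 2"
  have "poly (U_poly n l0 l1 l2) y = Fk n l0 l1 l2 u 0 x"
  proof -
    have "of_nat (n * (n - 1)) = (of_nat n * (of_nat n - 1) :: complex)"
      using n by (simp add: of_nat_diff)
    have "Fk n l0 l1 l2 u 0 x = l0 + l1 * (of_nat n / 2) * of_nat n * x
       + l2 * (of_nat n ^ 2 / 4) * (of_nat n * (of_nat n - 1) / 2) * x^2"
      by (simp add: Fk_def Let_def)
    moreover have "poly (U_poly n l0 l1 l2) y = l0 + y * (of_nat n * l1 + y * (of_nat (n * (n - 1)) / 2 * l2))"
      by (simp add: U_poly_def)
    hence "poly (U_poly n l0 l1 l2) y = l0 + y * (of_nat n * l1 + y * ((of_nat n * (of_nat n - 1)) / 2 * l2))"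
      unfolding \<open>of_nat (n * (n - 1)) = _\<close> .
    ultimately show ?thesis unfolding y_def alg_U by simp
  qed
  with h have "cmod y \<le> cmod (y - of_nat n / 2)" using adm by (simp add: B_admissible_def)
  hence "(cmod y)^2 \<le> (cmod (y - of_nat n / 2))^2" by (simp add: power_mono)
  moreover have "(cmod y)^2 = (Re y)^2 + (Im y)^2" by (rule cmod_power2)
  moreover have "(cmod (y - of_nat n / 2))^2 = (Re y - real n / 2)^2 + (Im y)^2"
    by (simp add: cmod_power2)
  moreover have "(Re y - real n / 2)^2 = (Re y)^2 - real n * Re y + (real n)^2 / 4"
    by (simp add: power2_eq_square algebra_simps)
  ultimately have le: "real n * Re y \<le> (real n)^2 / 4" by linarith
  have "Re y = real n * Re x / 2" by (simp add: y_def)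
  hence "real n * Re y = (real n)^2 * Re x / 2" by (simp add: power2_eq_square)
  moreover have "(real n)^2 * Re x > (real n)^2 * (1/2)"
    using n x by (intro mult_strict_left_mono) auto
  ultimately show False using le by linarith
qed

lemma gws:
  assumes adm: "B_admissible n l0 l1 l2" and n: "n \<ge> 1"
    and u: "\<And>i. i < n \<Longrightarrow> Re (u i) > 1/2"
  shows "l0 + l1 * (of_nat n / 2) * (\<Sum>i<n. u i) + l2 * (of_nat n ^ 2 / 4) * e2 u n \<noteq> 0"
proof -
  have "\<forall>x. Re x > 1/2 \<longrightarrow> Fk n l0 l1 l2 u k x \<noteq> 0" if "k \<le> n" for k
    using that
  proof (induction k)
    case 0 thus ?case using admissible_half[OF adm n] by blast
  next
    case (Suc k)
    hence IH: "\<And>x. Re x > 1/2 \<Longrightarrow> Fk n l0 l1 l2 u k x \<noteq> 0" by simp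
    define s1 where "s1 = (\<Sum>i<k. u i)"
    define al where "al = l0 + l1 * (of_nat n / 2) * s1 + l2 * (of_nat n ^ 2 / 4) * e2 u k"
    define be where "be = l1 * (of_nat n / 2) + l2 * (of_nat n ^ 2 / 4) * s1"
    define ga where "ga = l2 * (of_nat n ^ 2 / 4)"
    define m where "m = n - k"
    have m1: "m \<ge> 1" using Suc.prems by (simp add: m_def)
    have Fk_eq: "Fk n l0 l1 l2 u k x = al + be * of_nat m * x + ga * (of_nat m * (of_nat m - 1) / 2) * x^2" for x
      by (simp add: Fk_def al_def be_def ga_def s1_def m_def Let_def)
    have mSuc: "(of_nat (n - Suc k) :: complex) = of_nat m - 1" using Suc.prems by (simp add: m_def of_nat_diff)
    have Fk_eq2: "Fk n l0 l1 l2 u (Suc k) x =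
        (al + be * u k) + (be + ga * u k) * (of_nat m - 1) * x + ga * ((of_nat m - 1) * (of_nat m - 2) / 2) * x^2" for x
    proof -
      have "Fk n l0 l1 l2 u (Suc k) x = (l0 + l1*(of_nat n/2)*(s1 + u k) + l2*(of_nat n^2/4)*(e2 u k + u k * s1))
         + (l1*(of_nat n/2) + l2*(of_nat n^2/4)*(s1 + u k))*(of_nat m - 1)*x
         + (l2*(of_nat n^2/4))*((of_nat m - 1)*(of_nat m - 1 - 1)/2)*x^2"
        unfolding Fk_def Let_def mSuc by (simp add: s1_def)
      also have "\<dots> = (al + be * u k) + (be + ga * u k) * (of_nat m - 1) * x + ga * ((of_nat m - 1) * (of_nat m - 2) / 2) * x^2"
        unfolding al_def be_def ga_def by algebra
      finally show ?thesis .
    qed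
    have uk: "Re (u k) > 1/2" using u Suc.prems by simp
    show ?case
    proof (intro allI impI)
      fix x :: complex assume x: "Re x > 1/2"
      have q: "al + be * of_nat m * x' + ga * (of_nat m * (of_nat m - 1) / 2) * x'^2 \<noteq> 0"
        if "Re x' > 1/2" for x'
        using IH[OF that] unfolding Fk_eq .
      show "Fk n l0 l1 l2 u (Suc k) x \<noteq> 0"
        unfolding Fk_eq2 by (rule laguerre_step[OF m1 uk q x])
    qed
  qed
  from this[of n] have "Fk n l0 l1 l2 u n 1 \<noteq> 0" by simp
  thus ?thesis by (simp add: Fk_def)
qed



lemma prod_derivs:
  fixes w :: "nat \<Rightarrow> complex" and z :: complex
  defines "u \<equiv> (\<lambda>i. z / (z - w i))"
  assumes "\<And>i. i < k \<Longrightarrow> z \<noteq> w i"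
  shows "poly (\<Prod>i<k. [:-w i, 1:]) z = (\<Prod>i<k. (z - w i))
    \<and> z * poly (pderiv (\<Prod>i<k. [:-w i, 1:])) z = (\<Prod>i<k. (z - w i)) * (\<Sum>i<k. u i)
    \<and> z^2 * poly (pderiv (pderiv (\<Prod>i<k. [:-w i, 1:]))) z = 2 * (\<Prod>i<k. (z - w i)) * e2 u k"
  using assms(2)
proof (induction k)
  case 0 thus ?case by simp
next
  case (Suc k)
  define p where "p = (\<Prod>i<k. [:-w i, 1:])"
  define A where "A = (\<Prod>i<k. (z - w i))"
  define s1 where "s1 = (\<Sum>i<k. u i)"
  have IH: "poly p z = A" "z * poly (pderiv p) z = A * s1" "z^2 * poly (pderiv (pderiv p)) z = 2 * A * e2 u k"
    using Suc by (auto simp: p_def A_def s1_def)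
  have zw: "z \<noteq> w k" using Suc.prems by simp
  have zu: "z = u k * (z - w k)" using zw by (simp add: u_def)
  have P: "(\<Prod>i<Suc k. [:-w i, 1:]) = p * [:-w k, 1:]" by (simp add: p_def)
  have dL: "pderiv [:-w k, 1:] = 1" by (simp add: pderiv_pCons)
  have d1: "pderiv (p * [:-w k, 1:]) = p + [:-w k, 1:] * pderiv p"
    by (simp only: pderiv_mult dL mult_1_right)
  have d2: "pderiv (pderiv (p * [:-w k, 1:])) = 2 * pderiv p + [:-w k, 1:] * pderiv (pderiv p)"
    unfolding d1 pderiv_add pderiv_mult dL mult_1_right mult_2 by (simp only: add_ac)
  have e1: "z * poly (pderiv (p * [:-w k, 1:])) z = (z - w k) * (A * s1 + A * u k)"
  proof -
    have "z * poly (pderiv (p * [:-w k, 1:])) z = z * A + (z - w k) * (z * poly (pderiv p) z)"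
      unfolding d1 by (simp add: IH algebra_simps)
    also have "\<dots> = (z - w k) * (A * s1 + A * u k)"
      by (subst (1) zu) (simp add: IH algebra_simps)
    finally show ?thesis .
  qed
  have e2': "z^2 * poly (pderiv (pderiv (p * [:-w k, 1:]))) z = (z - w k) * (2 * A * (e2 u k + u k * s1))"
  proof -
    have "z^2 * poly (pderiv (pderiv (p * [:-w k, 1:]))) z
          = 2 * z * (z * poly (pderiv p) z) + (z - w k) * (z^2 * poly (pderiv (pderiv p)) z)"
      unfolding d2 by (simp add: algebra_simps power2_eq_square)
    also have "\<dots> = 2 * z * (A * s1) + (z - w k) * (2 * A * e2 u k)" by (simp only: IH)
    also have "\<dots> = (z - w k) * (2 * A * (e2 u k + u k * s1))"
      by (subst (1) zu) (simp add: algebra_simps)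
    finally show ?thesis .
  qed
  show ?case
    unfolding P using IH e1 e2' by (simp add: A_def s1_def algebra_simps)
qed

lemma B_op_factored:
  fixes w :: "nat \<Rightarrow> complex" and z c :: complex
  defines "u \<equiv> (\<lambda>i. z / (z - w i))"
  assumes "\<And>i. i < k \<Longrightarrow> z \<noteq> w i"
  shows "B_op n l0 l1 l2 (smult c (\<Prod>i<k. [:-w i, 1:])) z =
     c * (\<Prod>i<k. (z - w i)) * (l0 + l1 * (of_nat n / 2) * (\<Sum>i<k. u i) + l2 * (of_nat n ^ 2 / 4) * e2 u k)"
proof -
  note pd = prod_derivs[of k z w, OF assms(2), folded u_def]
  define p where "p = (\<Prod>i<k. [:-w i, 1:])"
  have "B_op n l0 l1 l2 (smult c p) z =
     c * (l0 * poly p z + l1 * (of_nat n / 2) * (z * poly (pderiv p) z)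
      + l2 * (of_nat n ^ 2 / 4) * (z^2 * poly (pderiv (pderiv p)) z) / 2)"
    by (simp add: B_op_def pderiv_smult power2_eq_square field_simps)
  also have "\<dots> = c * (\<Prod>i<k. (z - w i)) * (l0 + l1 * (of_nat n / 2) * (\<Sum>i<k. u i) + l2 * (of_nat n ^ 2 / 4) * e2 u k)"
    using pd unfolding p_def by (simp add: field_simps)
  finally show ?thesis by (simp add: p_def)
qed



lemma re_half:
  fixes z w :: complex
  assumes "cmod w < cmod z"
  shows "Re (z / (z - w)) > 1/2"
proof -
  have zw: "z - w \<noteq> 0" using assms by auto
  hence D: "(Re z - Re w)^2 + (Im z - Im w)^2 > 0"
    by (metis complex_eq_iff diff_self minus_complex.sel(1) minus_complex.sel(2) sum_power2_gt_zero_iff)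
  have "(cmod w)^2 < (cmod z)^2" using assms by (simp add: power_strict_mono)
  hence lt: "(Re w)^2 + (Im w)^2 < (Re z)^2 + (Im z)^2" by (simp add: cmod_power2)
  have "Re (z / (z - w)) = (Re z * (Re z - Re w) + Im z * (Im z - Im w)) / ((Re z - Re w)^2 + (Im z - Im w)^2)"
    by (simp add: Re_divide power2_eq_square)
  moreover have "(Re z * (Re z - Re w) + Im z * (Im z - Im w)) * 2 > (Re z - Re w)^2 + (Im z - Im w)^2"
    using lt by (simp add: power2_eq_square algebra_simps)
  ultimately show ?thesis using D by (simp add: field_simps)
qed

lemma B_nonzero:
  fixes G :: "complex poly"
  assumes adm: "B_admissible n l0 l1 l2" and n: "n \<ge> 1" and dG: "degree G = n"
    and roots: "\<And>x. poly G x = 0 \<Longrightarrow> cmod x < 1" and z: "cmod z \<ge> 1"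
  shows "B_op n l0 l1 l2 G z \<noteq> 0"
proof -
  obtain w where w: "smult (lead_coeff G) (\<Prod>i<degree G. [:-w i, 1:]) = G"
    using complex_poly_decompose' by blast
  have G0: "G \<noteq> 0" using dG n by auto
  have wroot: "poly G (w i) = 0" if "i < n" for i
  proof -
    have "poly (\<Prod>i<n. [:-w i, 1:]) (w i) = 0"
      using that by (simp add: poly_prod) (metis lessThan_iff)
    thus ?thesis by (subst w[symmetric]) (simp add: dG)
  qed
  have wl: "cmod (w i) < cmod z" if "i < n" for i using roots[OF wroot[OF that]] z by simp
  have zw: "z \<noteq> w i" if "i < n" for i using wl[OF that] by auto
  define u where "u = (\<lambda>i. z / (z - w i))"
  have "B_op n l0 l1 l2 G z = lead_coeff G * (\<Prod>i<n. (z - w i)) *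
      (l0 + l1 * (of_nat n / 2) * (\<Sum>i<n. u i) + l2 * (of_nat n ^ 2 / 4) * e2 u n)"
    using B_op_factored[where k=n and z=z and w=w and c="lead_coeff G" and n=n] zw w dG by (simp add: u_def)
  moreover have "l0 + l1 * (of_nat n / 2) * (\<Sum>i<n. u i) + l2 * (of_nat n ^ 2 / 4) * e2 u n \<noteq> 0"
    using gws[OF adm n] re_half[OF wl] by (simp add: u_def)
  moreover have "(\<Prod>i<n. (z - w i)) \<noteq> 0" using zw by simp
  ultimately show ?thesis using G0 by simp
qed



lemma B_op_diff: "B_op n l0 l1 l2 (p - q) z = B_op n l0 l1 l2 p z - B_op n l0 l1 l2 q z"
  by (simp add: B_op_def pderiv_diff algebra_simps diff_divide_distrib)

lemma B_op_smult: "B_op n l0 l1 l2 (smult c p) z = c * B_op n l0 l1 l2 p z"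
  by (simp add: B_op_def pderiv_smult algebra_simps)

lemma monom_pcompose: "monom (a::complex) n \<circ>\<^sub>p [:0, b:] = smult (b ^ n) (monom a n)"
  by (rule poly_eq_poly_eq_iff[THEN iffD1]) (simp add: fun_eq_iff poly_pcompose poly_monom power_mult_distrib)

definition cU :: "nat \<Rightarrow> complex \<Rightarrow> complex \<Rightarrow> complex \<Rightarrow> complex" where
  "cU n l0 l1 l2 = poly (U_poly n l0 l1 l2) (of_nat n / 2)"

lemma B_op_monom1:
  assumes "n \<ge> 1"
  shows "B_op n l0 l1 l2 (monom 1 n) z = cU n l0 l1 l2 * z ^ n"
proof -
  define N where "N = (of_nat n :: complex)"
  have d1: "poly (pderiv (monom 1 n)) z = N * z ^ (n - 1)" by (simp add: pderiv_monom poly_monom N_def)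
  have d2: "poly (pderiv (pderiv (monom 1 n))) z = of_nat (n - 1) * N * z ^ (n - 1 - 1)"
    by (simp add: pderiv_monom poly_monom N_def)
  have z1: "z * z ^ (n - 1) = z ^ n" using assms by (metis Suc_diff_le diff_Suc_1 power_Suc)
  have z2: "of_nat (n - 1) * (z^2 * z ^ (n - 1 - 1)) = (N - 1) * z ^ n"
  proof (cases "n = 1")
    case True thus ?thesis by (simp add: N_def)
  next
    case False
    hence "n - 1 - 1 + 2 = n" using assms by simp
    hence "z^2 * z ^ (n - 1 - 1) = z ^ n" by (metis power_add mult.commute)
    moreover have "of_nat (n - 1) = N - 1" using assms by (simp add: N_def of_nat_diff)
    ultimately show ?thesis by simp
  qed
  have "B_op n l0 l1 l2 (monom 1 n) z =
     l0 * z ^ n + l1 * (N / 2) * N * (z * z ^ (n - 1))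
     + l2 * (N / 2)^2 * N * (of_nat (n - 1) * (z^2 * z ^ (n - 1 - 1))) / 2"
    unfolding B_op_def d1 d2 by (simp add: poly_monom N_def power2_eq_square algebra_simps)
  also have "\<dots> = (l0 + l1 * (N / 2) * N + l2 * (N / 2)^2 * N * (N - 1) / 2) * z ^ n"
    unfolding z1 z2 by (simp add: algebra_simps)
  also have "l0 + l1 * (N / 2) * N + l2 * (N / 2)^2 * N * (N - 1) / 2 = cU n l0 l1 l2"
  proof -
    have e: "of_nat (n * (n - 1)) = N * (N - 1)" using assms by (simp add: N_def of_nat_diff)
    show ?thesis unfolding cU_def U_poly_def e by (simp add: N_def[symmetric] power2_eq_square field_simps)
  qed
  finally show ?thesis .
qed

lemma cU_nonzero:
  assumes "B_admissible n l0 l1 l2" "n \<ge> 1"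
  shows "cU n l0 l1 l2 \<noteq> 0"
proof
  assume "cU n l0 l1 l2 = 0"
  hence "cmod (of_nat n / 2 :: complex) \<le> cmod (of_nat n / 2 - of_nat n / 2 :: complex)"
    using assms(1) unfolding B_admissible_def cU_def by blast
  thus False using assms(2) by simp
qed

lemma dist_grow:
  fixes x w :: complex and R r k :: real
  assumes "cmod w < k" "k \<le> r" "r < R" "cmod x \<ge> 1"
  shows "cmod (of_real r * x - w) < cmod (of_real R * x - w)"
proof -
  have k0: "k > 0" using assms(1) by (meson le_less_trans norm_ge_zero)
  have "Re (x * cnj w) \<le> cmod (x * cnj w)" by (rule complex_Re_le_cmod)
  also have "\<dots> = cmod x * cmod w" by (simp add: norm_mult)
  also have "\<dots> < cmod x * k" using assms k0 by (intro mult_strict_left_mono) auto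
  also have "\<dots> \<le> cmod x * cmod x * k"
  proof -
    have "cmod x * k * 1 \<le> cmod x * k * cmod x" using assms k0 by (intro mult_left_mono) auto
    thus ?thesis by (simp add: mult.commute mult.left_commute)
  qed
  finally have "Re (x * cnj w) < cmod x * cmod x * k" .
  hence re: "Re (x * cnj w) < k * (cmod x)^2" by (simp add: power2_eq_square mult_ac)
  have sq: "(cmod (of_real s * x - w))^2 = s^2 * (cmod x)^2 - 2 * s * Re (x * cnj w) + (cmod w)^2" for s
    unfolding cmod_power2 by (simp add: power2_eq_square algebra_simps)
  have "(cmod (of_real R * x - w))^2 - (cmod (of_real r * x - w))^2
        = (R - r) * ((R + r) * (cmod x)^2 - 2 * Re (x * cnj w))"
    unfolding sq by (simp add: power2_eq_square algebra_simps)
  moreover have "(R + r) * (cmod x)^2 - 2 * Re (x * cnj w) > 0"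
  proof -
    have "(R + r) * (cmod x)^2 \<ge> (2 * k) * (cmod x)^2" using assms by (intro mult_right_mono) auto
    hence "(R + r) * (cmod x)^2 \<ge> 2 * (k * (cmod x)^2)" by (simp add: mult.assoc)
    thus ?thesis using re by linarith
  qed
  moreover have "R - r > 0" using assms by simp
  ultimately have "(R - r) * ((R + r) * (cmod x)^2 - 2 * Re (x * cnj w)) > 0"
    by (simp add: mult_pos_pos)
  hence "(cmod (of_real r * x - w))^2 < (cmod (of_real R * x - w))^2"
    using \<open>(cmod (of_real R * x - w))^2 - (cmod (of_real r * x - w))^2 = _\<close> by linarith
  thus ?thesis by (simp add: power_less_imp_less_base)
qed



lemma G_roots:
  fixes F :: "complex poly" and \<alpha> :: complex and R r k :: real
  assumes dF: "degree F = n" and n: "n \<ge> 1" and rootsF: "\<And>x. poly F x = 0 \<Longrightarrow> cmod x < k"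
    and a: "cmod \<alpha> \<le> 1" and Rr: "R > r" "r \<ge> k" and x: "cmod x \<ge> 1"
  shows "poly F (of_real R * x) - \<alpha> * poly F (of_real r * x) \<noteq> 0"
proof -
  obtain w where w: "smult (lead_coeff F) (\<Prod>i<degree F. [:-w i, 1:]) = F"
    using complex_poly_decompose' by blast
  have F0: "F \<noteq> 0" using dF n by auto
  have wroot: "poly F (w i) = 0" if "i < n" for i
  proof -
    have "poly (\<Prod>i<n. [:-w i, 1:]) (w i) = 0"
      using that by (simp add: poly_prod) (metis lessThan_iff)
    thus ?thesis by (subst w[symmetric]) (simp add: dF)
  qed
  have wk: "cmod (w i) < k" if "i < n" for i using rootsF[OF wroot[OF that]] .
  have pF: "poly F y = lead_coeff F * (\<Prod>i<n. (y - w i))" for y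
    by (subst w[symmetric]) (simp add: dF poly_prod)
  have k0: "k > 0" using wk[of 0] n by (meson le_less_trans norm_ge_zero less_le_trans zero_less_one)
  have lt: "cmod (of_real r * x - w i) < cmod (of_real R * x - w i)" if "i < n" for i
    using dist_grow[OF wk[OF that] Rr(2) Rr(1) x] .
  have pos: "cmod (of_real r * x - w i) > 0" if "i < n" for i
  proof -
    have "cmod (w i) < cmod (of_real r * x)"
    proof -
      have "cmod (of_real r * x) = r * cmod x" using Rr k0 by (simp add: norm_mult)
      also have "\<dots> \<ge> r * 1" using Rr k0 x by (intro mult_left_mono) auto
      finally show ?thesis using wk[OF that] Rr by simp
    qed
    thus ?thesis by auto
  qed
  have "(\<Prod>i<n. cmod (of_real r * x - w i)) < (\<Prod>i<n. cmod (of_real R * x - w i))"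
  proof (rule prod_mono_strict[of 0])
    show "0 \<in> {..<n}" using n by simp
    show "cmod (of_real r * x - w 0) < cmod (of_real R * x - w 0)" using lt n by simp
    show "\<And>i. i \<in> {..<n} \<Longrightarrow> 0 \<le> cmod (of_real r * x - w i) \<and> cmod (of_real r * x - w i) \<le> cmod (of_real R * x - w i)"
      using lt by (auto intro: less_imp_le)
    show "\<And>i. i \<in> {..<n} \<Longrightarrow> 0 < cmod (of_real R * x - w i)"
      using lt pos by (meson lessThan_iff less_trans)
  qed simp
  hence "cmod (poly F (of_real r * x)) < cmod (poly F (of_real R * x))"
    using F0 by (simp add: pF norm_mult prod_norm)
  moreover have "cmod (\<alpha> * poly F (of_real r * x)) \<le> cmod (poly F (of_real r * x))"
    using a by (simp add: norm_mult mult_left_le_one_le)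
  ultimately show ?thesis by (metis eq_iff_diff_eq_0 not_less order_trans order.strict_implies_order)
qed

lemma max_circle_monom:
  assumes "k > 0"
  shows "max_circle (monom a n) k = cmod a * k ^ n"
proof -
  have "max_circle (monom a n) k = (SUP z\<in>sphere (0::complex) k. cmod a * k ^ n)"
    unfolding max_circle_def
    by (rule arg_cong[where f=Sup], rule image_cong) (simp_all add: poly_monom norm_mult norm_power)
  also have "\<dots> = cmod a * k ^ n"
  proof (rule cSUP_const)
    have "of_real k \<in> sphere (0::complex) k" using assms by simp
    thus "sphere (0::complex) k \<noteq> {}" by blast
  qed
  finally show ?thesis .
qed

theorem corollary2p5:
  fixes n :: nat and k :: real and P :: "complex poly" and l0 l1 l2 :: complex
  assumes "n \<ge> 1" and "k > 0" and "degree P \<le> n"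
    and "B_admissible n l0 l1 l2"
  shows "(\<forall>\<alpha> R r z. cmod \<alpha> \<le> 1 \<and> R > r \<and> r \<ge> k \<and> cmod z \<ge> 1 \<longrightarrow>
            cmod (B_op n l0 l1 l2 (P \<circ>\<^sub>p [:0, of_real R:]) z
                  - \<alpha> * B_op n l0 l1 l2 (P \<circ>\<^sub>p [:0, of_real r:]) z)
            \<le> cmod (of_real (R ^ n) - \<alpha> * of_real (r ^ n)) / k ^ n
               * cmod (B_op n l0 l1 l2 (monom 1 n) z) * max_circle P k)
       \<and> (\<forall>a \<alpha> R r z. a \<noteq> 0 \<and> cmod \<alpha> \<le> 1 \<and> R > r \<and> r \<ge> k \<and> cmod z \<ge> 1 \<longrightarrow>
            cmod (B_op n l0 l1 l2 (monom a n \<circ>\<^sub>p [:0, of_real R:]) z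
                  - \<alpha> * B_op n l0 l1 l2 (monom a n \<circ>\<^sub>p [:0, of_real r:]) z)
            = cmod (of_real (R ^ n) - \<alpha> * of_real (r ^ n)) / k ^ n
               * cmod (B_op n l0 l1 l2 (monom 1 n) z) * max_circle (monom a n) k)"
proof (intro conjI allI impI)
  note n = assms(1) and k = assms(2) and dP = assms(3) and adm = assms(4)
  have cR: "c \<noteq> 0" if "R > r" "r \<ge> k" "cmod \<alpha> \<le> 1" and c: "c = of_real (R ^ n) - \<alpha> * of_real (r ^ n)"
    for c :: complex and R r \<alpha>
  proof
    assume "c = 0"
    hence "of_real (R ^ n) = \<alpha> * of_real (r ^ n)" using c by simp
    hence "R ^ n = cmod \<alpha> * r ^ n" using that k
      by (metis abs_of_nonneg norm_mult norm_of_real zero_le_power less_le_trans less_imp_le)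
    also have "\<dots> \<le> r ^ n" using that k by (simp add: mult_left_le_one_le)
    also have "r ^ n < R ^ n" using that k n by (intro power_strict_mono) auto
    finally show False by simp
  qed
  fix \<alpha> :: complex and R r :: real and z :: complex
  {
    assume h: "cmod \<alpha> \<le> 1 \<and> R > r \<and> r \<ge> k \<and> cmod z \<ge> 1"
    define Bm where "Bm = B_op n l0 l1 l2 (monom 1 n) z"
    define c where "c = (of_real (R ^ n) - \<alpha> * of_real (r ^ n) :: complex)"
    define T where "T = B_op n l0 l1 l2 (P \<circ>\<^sub>p [:0, of_real R:]) z - \<alpha> * B_op n l0 l1 l2 (P \<circ>\<^sub>p [:0, of_real r:]) z"
    define M where "M = max_circle P k"
    have c0: "c \<noteq> 0" using cR[of r R \<alpha> c] h by (simp add: c_def)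
    have z0: "z \<noteq> 0" using h by auto
    have Bm0: "Bm \<noteq> 0" using B_op_monom1[OF n] cU_nonzero[OF adm n] z0 by (simp add: Bm_def)
    have main: "cmod T \<le> cmod c / k ^ n * cmod Bm * M"
    proof (rule ccontr)
      assume "\<not> ?thesis"
      hence gt: "cmod T > cmod c / k ^ n * cmod Bm * M" by simp
      define D where "D = c * Bm"
      have D0: "D \<noteq> 0" using c0 Bm0 by (simp add: D_def)
      define \<mu> where "\<mu> = T / D"
      have "cmod T > cmod D * (M / k ^ n)" using gt by (simp add: D_def norm_mult field_simps)
      hence mu: "cmod \<mu> > M / k ^ n" using D0 by (simp add: \<mu>_def norm_divide field_simps)
      define F where "F = P - smult \<mu> (monom 1 n)"
      have cF: "coeff F n = coeff P n - \<mu>" by (simp add: F_def)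
      have cFn: "coeff F n \<noteq> 0"
      proof
        assume "coeff F n = 0"
        hence "coeff P n = \<mu>" using cF by simp
        thus False using lead_bound[OF dP k] mu by (simp add: M_def)
      qed
      have dF: "degree F = n"
      proof (rule antisym)
        show "degree F \<le> n" unfolding F_def using dP
          by (intro degree_diff_le) (auto intro: order_trans[OF degree_smult_le] degree_monom_le)
        show "n \<le> degree F" using cFn by (rule le_degree)
      qed
      have rootsF: "cmod x < k" if "poly F x = 0" for x
      proof (rule ccontr)
        assume "\<not> cmod x < k"
        hence xk: "cmod x \<ge> k" by simp
        hence x0: "x \<noteq> 0" using k by auto
        have "poly P x = \<mu> * x ^ n" using that by (simp add: F_def poly_monom)
        hence "cmod \<mu> * cmod x ^ n \<le> M * cmod x ^ n / k ^ n"
          using outer_bound[OF dP k xk] by (simp add: M_def norm_mult norm_power)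
        moreover have "M / k ^ n * cmod x ^ n < cmod \<mu> * cmod x ^ n"
          using mu x0 by (intro mult_strict_right_mono) auto
        ultimately show False by (simp add: field_simps)
      qed
      define G where "G = F \<circ>\<^sub>p [:0, of_real R:] - smult \<alpha> (F \<circ>\<^sub>p [:0, of_real r:])"
      have cG: "coeff G n = c * coeff F n"
        by (simp add: G_def coeff_pcompose_linear c_def algebra_simps)
      have dG: "degree G = n"
      proof (rule antisym)
        have "degree (F \<circ>\<^sub>p [:0, of_real s:]) \<le> n" for s :: real
          using degree_pcompose_le[of F "[:0, of_real s:]"] dF by (simp split: if_splits)
        thus "degree G \<le> n" unfolding G_def
          by (intro degree_diff_le) (auto intro: order_trans[OF degree_smult_le])
        show "n \<le> degree G" using cFn c0 cG by (intro le_degree) simp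
      qed
      have rootsG: "cmod x < 1" if "poly G x = 0" for x
      proof (rule ccontr)
        assume "\<not> cmod x < 1"
        hence "cmod x \<ge> 1" by simp
        from G_roots[OF dF n rootsF _ _ _ this, of \<alpha> r R] h
        have "poly F (of_real R * x) - \<alpha> * poly F (of_real r * x) \<noteq> 0" by auto
        thus False using that by (simp add: G_def poly_pcompose mult.commute)
      qed
      have "B_op n l0 l1 l2 G z \<noteq> 0" by (rule B_nonzero[OF adm n dG rootsG]) (use h in auto)
      moreover have "B_op n l0 l1 l2 G z = T - \<mu> * D"
      proof -
        have pc: "F \<circ>\<^sub>p [:0, of_real s:] = P \<circ>\<^sub>p [:0, of_real s:] - smult (\<mu> * of_real s ^ n) (monom 1 n)" for s :: real
          by (simp add: F_def pcompose_diff pcompose_smult monom_pcompose)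
        show ?thesis
          unfolding G_def pc B_op_diff B_op_smult
          by (simp add: T_def D_def c_def Bm_def algebra_simps)
      qed
      moreover have "T - \<mu> * D = 0" using D0 by (simp add: \<mu>_def)
      ultimately show False by simp
    qed
    hence "cmod (B_op n l0 l1 l2 (P \<circ>\<^sub>p [:0, of_real R:]) z
                  - \<alpha> * B_op n l0 l1 l2 (P \<circ>\<^sub>p [:0, of_real r:]) z)
            \<le> cmod (of_real (R ^ n) - \<alpha> * of_real (r ^ n)) / k ^ n
               * cmod (B_op n l0 l1 l2 (monom 1 n) z) * max_circle P k"
      by (simp only: T_def c_def Bm_def M_def)
  }
  thus "cmod \<alpha> \<le> 1 \<and> R > r \<and> r \<ge> k \<and> cmod z \<ge> 1 \<Longrightarrow>
            cmod (B_op n l0 l1 l2 (P \<circ>\<^sub>p [:0, of_real R:]) z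
                  - \<alpha> * B_op n l0 l1 l2 (P \<circ>\<^sub>p [:0, of_real r:]) z)
            \<le> cmod (of_real (R ^ n) - \<alpha> * of_real (r ^ n)) / k ^ n
               * cmod (B_op n l0 l1 l2 (monom 1 n) z) * max_circle P k" by blast
next
  note n = assms(1) and k = assms(2)
  fix a \<alpha> :: complex and R r :: real and z :: complex
  assume h: "a \<noteq> 0 \<and> cmod \<alpha> \<le> 1 \<and> R > r \<and> r \<ge> k \<and> cmod z \<ge> 1"
  define Bm where "Bm = B_op n l0 l1 l2 (monom 1 n) z"
  have mB: "B_op n l0 l1 l2 (monom a n \<circ>\<^sub>p [:0, of_real s:]) z = of_real (s ^ n) * a * Bm" for s :: real
  proof -
    have "monom a n \<circ>\<^sub>p [:0, of_real s:] = smult (of_real (s ^ n) * a) (monom 1 n)"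
      by (simp add: monom_pcompose smult_monom)
    thus ?thesis by (simp add: B_op_smult Bm_def)
  qed
  have "cmod (of_real (R ^ n) * a * Bm - \<alpha> * (of_real (r ^ n) * a * Bm))
        = cmod (of_real (R ^ n) - \<alpha> * of_real (r ^ n)) * cmod a * cmod Bm"
    by (simp add: norm_mult algebra_simps flip: norm_mult)
  also have "\<dots> = cmod (of_real (R ^ n) - \<alpha> * of_real (r ^ n)) / k ^ n * cmod Bm * (cmod a * k ^ n)"
    using k by (simp add: field_simps)
  finally show "cmod (B_op n l0 l1 l2 (monom a n \<circ>\<^sub>p [:0, of_real R:]) z
                  - \<alpha> * B_op n l0 l1 l2 (monom a n \<circ>\<^sub>p [:0, of_real r:]) z)
            = cmod (of_real (R ^ n) - \<alpha> * of_real (r ^ n)) / k ^ n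
               * cmod (B_op n l0 l1 l2 (monom 1 n) z) * max_circle (monom a n) k"
    by (simp add: mB max_circle_monom[OF k] Bm_def)
qed

end
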